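(* Let $i=\lambda y.y$, and let $x$, $k$ be distinct variables. Then $\langle (\langle x\,i\rangle)\,(\mathcal{S}k.i)\rangle \simeq_{\mathrm{ctx}} \langle (\langle x\,i\rangle)\,((\langle x\,i\rangle)\,(\mathcal{S}k.i))\rangle$, but these two terms are not normal form bisimilar, i.e. $\langle (\langle x\,i\rangle)\,(\mathcal{S}k.i)\rangle \not\sim \langle (\langle x\,i\rangle)\,((\langle x\,i\rangle)\,(\mathcal{S}k.i))\rangle$.
   Context: The calculus $\lambda_{\mathcal S}$. Terms: $t ::= x \mid \lambda x.t \mid t\,t \mid \mathcal{S}k.t \mid \langle t\rangle$ ($\mathcal{S}$ is shift, $\langle\cdot\rangle$ is reset); values: $v ::= \lambda x.t \mid x$. Binders: $\lambda x.t$ binds $x$, $\mathcal{S}k.t$ binds $k$; terms up to $\alpha$-conversion; $\mathrm{fv}$, capture-avoiding substitution $t\{v/x\}$. Pure contexts $F ::= [\,] \mid v\,F \mid F\,t$; evaluation contexts $E ::= [\,] \mid v\,E \mid E\,t \mid \langle E\rangle$; general contexts $C ::= [\,] \mid \lambda x.C \mid t\,C \mid C\,t \mid \mathcal{S}k.C \mid \langle C\rangle$ (hole-filling may capture). Reduction: $E[(\lambda x.t)\,v] \to E[t\{v/x\}]$; $E[\langle F[\mathcal{S}k.t]\rangle] \to E[\langle t\{\lambda x.\langle F[x]\rangle/k\}\rangle]$ ($x\notin\mathrm{fv}(F)$); $E[\langle v\rangle]\to E[v]$. $t\Downarrow t'$ iff $t\to^*t'$ and $t'$ irreducible. Stuck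 term: not a value and irreducible; normal form: value or stuck; control stuck terms: $F[\mathcal{S}k.t]$; open stuck terms: $E[x\,v]$. Fresh: not free in the terms/contexts considered. Contextual equivalence $\simeq_{\mathrm{ctx}}$: $t_0\simeq_{\mathrm{ctx}}t_1$ iff for all contexts $C$ with $C[t_0],C[t_1]$ closed, $C[t_0]$ evaluates to a value iff... more precisely: $C[t_0]\Downarrow$ a value implies $C[t_1]\Downarrow$ a value, $C[t_0]\Downarrow$ a control stuck term implies $C[t_1]\Downarrow$ a control stuck term, and conversely. Normal form bisimilarity $\sim$. For $\mathcal R$ on terms, extend to evaluation contexts: $E_0\mathrel{\mathcal R}E_1$ iff either $E_0=E_0'[\langle F_0\rangle]$, $E_1=E_1'[\langle F_1\rangle]$ ($F_i$ pure) with $E_0'[x]\mathrel{\mathcal R}E_1'[x]$ and $\langle F_0[x]\rangle\mathrel{\mathcal R}\langle F_1[x]\rangle$ for fresh $x$, or $E_0=F_0$, $E_1=F_1$ pure with $F_0[x]\mathrel{\mathcal R}F_1[x]$ for fresh $x$. $v\mathbin{@}y$ is $x\,y$ if $v=x$ and $t\{y/x\}$ if $v=\lambda x.t$. $\mathcal R^{\mathrm{nf}}$ on normal forms: $v_0\mathrel{\mathcal R^{\mathrm{nf}}}v_1$ if $v_0\mathbin{@}x\mathrel{\mathcal R}v_1\mathbin{@}x$ ($x$ fresh); $F_0[\mathcal{S}k.t_0]\mathrel{\mathcal R^{\mathrm{nf}}}F_1[\mathcal{S}k.t_1]$ if $F_0\mathrel{\mathcal R}F_1$ and $\langle t_0\rangle\mathrel{\mathcal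 R}\langle t_1\rangle$; $E_0[x\,v_0]\mathrel{\mathcal R^{\mathrm{nf}}}E_1[x\,v_1]$ if $E_0\mathrel{\mathcal R}E_1$ and $v_0\mathrel{\mathcal R^{\mathrm{nf}}}v_1$. $\mathcal R$ is a normal form simulation if $t_0\mathrel{\mathcal R}t_1$, $t_0\Downarrow t_0'$ imply $t_1\Downarrow t_1'$ with $t_0'\mathrel{\mathcal R^{\mathrm{nf}}}t_1'$; a bisimulation if $\mathcal R$ and $\mathcal R^{-1}$ are simulations; $\sim$ is the largest normal form bisimulation. *)

theory Defs
  imports Main
begin

section \<open>Syntax of lambda_S (de Bruijn indices: terms are taken up to alpha-conversion)\<close>

text \<open>Var i is a variable (de Bruijn index); Lam t is lambda x.t (binds index 0 in t);
  Sft t is shift k.t (binds k as index 0 in t); Rst t is reset.\<close>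

datatype trm = Var nat | Lam trm | App trm trm | Sft trm | Rst trm

fun is_val :: "trm \<Rightarrow> bool" where
  "is_val (Var _) = True"
| "is_val (Lam _) = True"
| "is_val _ = False"

text \<open>Free variables (loose indices, expressed w.r.t. the outermost level).\<close>
fun fv :: "trm \<Rightarrow> nat set" where
  "fv (Var i) = {i}"
| "fv (Lam t) = (\<lambda>i. i - 1) ` (fv t - {0})"
| "fv (App t u) = fv t \<union> fv u"
| "fv (Sft t) = (\<lambda>i. i - 1) ` (fv t - {0})"
| "fv (Rst t) = fv t"

definition closed :: "trm \<Rightarrow> bool" where
  "closed t \<longleftrightarrow> fv t = {}"

fun lift :: "nat \<Rightarrow> trm \<Rightarrow> trm" where
  "lift k (Var i) = (if i < k then Var i else Var (Suc i))"
| "lift k (Lam t) = Lam (lift (Suc k) t)"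
| "lift k (App t u) = App (lift k t) (lift k u)"
| "lift k (Sft t) = Sft (lift (Suc k) t)"
| "lift k (Rst t) = Rst (lift k t)"

text \<open>Capture-avoiding substitution: subst t k s replaces index k by s and
  decrements the indices above k (the binder of k is removed).\<close>
fun subst :: "trm \<Rightarrow> nat \<Rightarrow> trm \<Rightarrow> trm" where
  "subst (Var i) k s = (if k < i then Var (i - 1) else if i = k then s else Var i)"
| "subst (Lam t) k s = Lam (subst t (Suc k) (lift 0 s))"
| "subst (App t u) k s = App (subst t k s) (subst u k s)"
| "subst (Sft t) k s = Sft (subst t (Suc k) (lift 0 s))"
| "subst (Rst t) k s = Rst (subst t k s)"

datatype ectx = EHole | EAppR trm ectx | EAppL ectx trm | ERst ectx

fun plugE :: "ectx \<Rightarrow> trm \<Rightarrow> trm" where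
  "plugE EHole t = t"
| "plugE (EAppR v E) t = App v (plugE E t)"
| "plugE (EAppL E u) t = App (plugE E t) u"
| "plugE (ERst E) t = Rst (plugE E t)"

fun ectx_ok :: "ectx \<Rightarrow> bool" where
  "ectx_ok EHole = True"
| "ectx_ok (EAppR v E) = (is_val v \<and> ectx_ok E)"
| "ectx_ok (EAppL E u) = ectx_ok E"
| "ectx_ok (ERst E) = ectx_ok E"

fun pure :: "ectx \<Rightarrow> bool" where
  "pure EHole = True"
| "pure (EAppR v E) = (is_val v \<and> pure E)"
| "pure (EAppL E u) = pure E"
| "pure (ERst E) = False"

fun compE :: "ectx \<Rightarrow> ectx \<Rightarrow> ectx" where
  "compE EHole E' = E'"
| "compE (EAppR v E) E' = EAppR v (compE E E')"
| "compE (EAppL E u) E' = EAppL (compE E E') u"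
| "compE (ERst E) E' = ERst (compE E E')"

fun liftE :: "nat \<Rightarrow> ectx \<Rightarrow> ectx" where
  "liftE k EHole = EHole"
| "liftE k (EAppR v E) = EAppR (lift k v) (liftE k E)"
| "liftE k (EAppL E u) = EAppL (liftE k E) (lift k u)"
| "liftE k (ERst E) = ERst (liftE k E)"

fun fvE :: "ectx \<Rightarrow> nat set" where
  "fvE EHole = {}"
| "fvE (EAppR v E) = fv v \<union> fvE E"
| "fvE (EAppL E u) = fvE E \<union> fv u"
| "fvE (ERst E) = fvE E"

inductive contr :: "trm \<Rightarrow> trm \<Rightarrow> bool" where
  beta: "is_val v \<Longrightarrow> contr (App (Lam t) v) (subst t 0 v)"
| shift: "pure F \<Longrightarrow>
     contr (Rst (plugE F (Sft t)))
           (Rst (subst t 0 (Lam (Rst (plugE (liftE 0 F) (Var 0))))))"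
| reset: "is_val v \<Longrightarrow> contr (Rst v) v"

definition step :: "trm \<Rightarrow> trm \<Rightarrow> bool" where
  "step t t' \<longleftrightarrow> (\<exists>E s s'. ectx_ok E \<and> contr s s' \<and> t = plugE E s \<and> t' = plugE E s')"

definition irreducible :: "trm \<Rightarrow> bool" where
  "irreducible t \<longleftrightarrow> \<not> (\<exists>t'. step t t')"

definition eval :: "trm \<Rightarrow> trm \<Rightarrow> bool" where
  "eval t t' \<longleftrightarrow> step\<^sup>*\<^sup>* t t' \<and> irreducible t'"

definition control_stuck :: "trm \<Rightarrow> bool" where
  "control_stuck t \<longleftrightarrow> (\<exists>F s. pure F \<and> t = plugE F (Sft s))"

datatype ctx = CHole | CLam ctx | CAppL ctx trm | CAppR trm ctx | CSft ctx | CRst ctx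

text \<open>Plugging is purely structural, so free variables of the plugged term may be
  captured by binders of the context (as in the paper).\<close>
fun plug :: "ctx \<Rightarrow> trm \<Rightarrow> trm" where
  "plug CHole t = t"
| "plug (CLam C) t = Lam (plug C t)"
| "plug (CAppL C u) t = App (plug C t) u"
| "plug (CAppR u C) t = App u (plug C t)"
| "plug (CSft C) t = Sft (plug C t)"
| "plug (CRst C) t = Rst (plug C t)"

definition ctx_equiv :: "trm \<Rightarrow> trm \<Rightarrow> bool" where
  "ctx_equiv t0 t1 \<longleftrightarrow>
     (\<forall>C. closed (plug C t0) \<and> closed (plug C t1) \<longrightarrow>
        ((\<exists>v. eval (plug C t0) v \<and> is_val v) \<longleftrightarrow> (\<exists>v. eval (plug C t1) v \<and> is_val v)) \<and>
        ((\<exists>s. eval (plug C t0) s \<and> control_stuck s) \<longleftrightarrow> (\<exists>s. eval (plug C t1) s \<and> control_stuck s)))"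

definition ectx_rel :: "(trm \<Rightarrow> trm \<Rightarrow> bool) \<Rightarrow> ectx \<Rightarrow> ectx \<Rightarrow> bool" where
  "ectx_rel R E0 E1 \<longleftrightarrow>
     (\<exists>E0' F0 E1' F1. ectx_ok E0' \<and> ectx_ok E1' \<and> pure F0 \<and> pure F1 \<and>
        E0 = compE E0' (ERst F0) \<and> E1 = compE E1' (ERst F1) \<and>
        (\<forall>x. x \<notin> fvE E0 \<union> fvE E1 \<longrightarrow>
           R (plugE E0' (Var x)) (plugE E1' (Var x)) \<and>
           R (Rst (plugE F0 (Var x))) (Rst (plugE F1 (Var x))))) \<or>
     (pure E0 \<and> pure E1 \<and>
        (\<forall>x. x \<notin> fvE E0 \<union> fvE E1 \<longrightarrow> R (plugE E0 (Var x)) (plugE E1 (Var x))))"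

fun app_at :: "trm \<Rightarrow> nat \<Rightarrow> trm" where
  "app_at (Var x) y = App (Var x) (Var y)"
| "app_at (Lam t) y = subst t 0 (Var y)"
| "app_at t y = App t (Var y)"

definition val_rel :: "(trm \<Rightarrow> trm \<Rightarrow> bool) \<Rightarrow> trm \<Rightarrow> trm \<Rightarrow> bool" where
  "val_rel R v0 v1 \<longleftrightarrow> is_val v0 \<and> is_val v1 \<and>
     (\<forall>x. x \<notin> fv v0 \<union> fv v1 \<longrightarrow> R (app_at v0 x) (app_at v1 x))"

text \<open>In the control-stuck clause, the bodies s0, s1 of the shifts have the captured
  continuation variable k as index 0 (the same k for both, as required).\<close>
definition nf_rel :: "(trm \<Rightarrow> trm \<Rightarrow> bool) \<Rightarrow> trm \<Rightarrow> trm \<Rightarrow> bool" where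
  "nf_rel R t0 t1 \<longleftrightarrow>
     val_rel R t0 t1 \<or>
     (\<exists>F0 F1 s0 s1. pure F0 \<and> pure F1 \<and> t0 = plugE F0 (Sft s0) \<and> t1 = plugE F1 (Sft s1) \<and>
        ectx_rel R F0 F1 \<and> R (Rst s0) (Rst s1)) \<or>
     (\<exists>E0 E1 x v0 v1. ectx_ok E0 \<and> ectx_ok E1 \<and>
        t0 = plugE E0 (App (Var x) v0) \<and> t1 = plugE E1 (App (Var x) v1) \<and>
        ectx_rel R E0 E1 \<and> val_rel R v0 v1)"

definition nf_sim :: "(trm \<Rightarrow> trm \<Rightarrow> bool) \<Rightarrow> bool" where
  "nf_sim R \<longleftrightarrow> (\<forall>t0 t1 t0'. R t0 t1 \<longrightarrow> eval t0 t0' \<longrightarrow> (\<exists>t1'. eval t1 t1' \<and> nf_rel R t0' t1'))"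

definition nf_bisim :: "(trm \<Rightarrow> trm \<Rightarrow> bool) \<Rightarrow> bool" where
  "nf_bisim R \<longleftrightarrow> nf_sim R \<and> nf_sim (conversep R)"

definition nf_bisimilar :: "trm \<Rightarrow> trm \<Rightarrow> bool" where
  "nf_bisimilar t0 t1 \<longleftrightarrow> (\<exists>R. nf_bisim R \<and> R t0 t1)"

definition I_trm :: trm where "I_trm = Lam (Var 0)"

end

theory Submission
  imports Defs
begin

lemma plugE_Var[simp]: "plugE E s = Var i \<longleftrightarrow> E = EHole \<and> s = Var i" by (cases E) auto
lemma plugE_Lam[simp]: "plugE E s = Lam b \<longleftrightarrow> E = EHole \<and> s = Lam b" by (cases E) auto
lemma plugE_Sft[simp]: "plugE E s = Sft b \<longleftrightarrow> E = EHole \<and> s = Sft b" by (cases E) auto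
lemma plugE_Rst: "plugE E s = Rst u \<longleftrightarrow> (E = EHole \<and> s = Rst u) \<or> (\<exists>E'. E = ERst E' \<and> plugE E' s = u)"
  by (cases E) auto
lemma plugE_App: "plugE E s = App p q \<longleftrightarrow> (E = EHole \<and> s = App p q) \<or> (\<exists>E'. E = EAppL E' q \<and> plugE E' s = p)
   \<or> (\<exists>E'. E = EAppR p E' \<and> plugE E' s = q)"
  by (cases E) auto

lemma plugE_Var'[simp]: "Var i = plugE E s \<longleftrightarrow> E = EHole \<and> s = Var i" by (cases E) auto
lemma plugE_Lam'[simp]: "Lam b = plugE E s \<longleftrightarrow> E = EHole \<and> s = Lam b" by (cases E) auto
lemma plugE_Sft'[simp]: "Sft b = plugE E s \<longleftrightarrow> E = EHole \<and> s = Sft b" by (cases E) auto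

lemma is_val_plugE[simp]: "is_val (plugE E r) \<longleftrightarrow> E = EHole \<and> is_val r"
  by (cases E) auto

lemma contr_App_inv: "contr (App p q) r \<Longrightarrow> is_val q \<and> (\<exists>b. p = Lam b)"
  by (cases rule: contr.cases) auto

lemma contr_Rst_inv: "contr (Rst p) r \<Longrightarrow> is_val p \<or> (\<exists>F b. pure F \<and> p = plugE F (Sft b))"
  by (cases rule: contr.cases) auto

lemma contr_Sft_inv: "contr (Sft p) r \<Longrightarrow> False"
  by (auto elim: contr.cases)

lemma plugE_val: "is_val v \<Longrightarrow> plugE E s = v \<Longrightarrow> E = EHole"
  by (cases E) auto

lemma contr_not_val: "contr s s' \<Longrightarrow> \<not> is_val s"
  by (induction rule: contr.induct) auto

lemma val_no_redex: "is_val (plugE E r) \<Longrightarrow> \<not> contr r r'"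
  by (metis contr_not_val plugE.simps(1) plugE_val)

lemma plug_sft_not_val: "\<not> is_val (plugE F (Sft b))"
  by (cases F) auto

lemma pure_plug_not_Rst: "pure F \<Longrightarrow> plugE F (Sft b) \<noteq> Rst u"
  by (cases F) auto

lemma plugE_compE: "plugE (compE E E2) t = plugE E (plugE E2 t)"
  by (induction E) auto

lemma ok_compE: "ectx_ok E \<Longrightarrow> ectx_ok E2 \<Longrightarrow> ectx_ok (compE E E2)"
  by (induction E) auto

lemma pure_ok: "pure F \<Longrightarrow> ectx_ok F"
  by (induction F) auto

lemma pure_compE: "pure E \<Longrightarrow> pure E2 \<Longrightarrow> pure (compE E E2)"
  by (induction E) auto

lemma step_ctx: "step r r' \<Longrightarrow> ectx_ok E \<Longrightarrow> step (plugE E r) (plugE E r')"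
  unfolding step_def by (metis ok_compE plugE_compE)

lemma steps_ctx: "step\<^sup>*\<^sup>* r r' \<Longrightarrow> ectx_ok E \<Longrightarrow> step\<^sup>*\<^sup>* (plugE E r) (plugE E r')"
  by (induction rule: rtranclp_induct) (auto intro: step_ctx rtranclp.rtrancl_into_rtrancl)

lemma pow_ctx: "(step ^^ n) r r' \<Longrightarrow> ectx_ok E \<Longrightarrow> (step ^^ n) (plugE E r) (plugE E r')"
proof (induction n arbitrary: r)
  case (Suc n)
  then obtain r1 where "step r r1" "(step ^^ n) r1 r'" using relpowp_Suc_D2 by metis
  then show ?case using Suc by (meson relpowp_Suc_I2 step_ctx)
qed simp

lemma contr_step: "contr s s' \<Longrightarrow> step s s'"
  unfolding step_def by (rule exI[of _ EHole]) auto

lemma pure_sft_no_redex: "pure F \<Longrightarrow> ectx_ok E \<Longrightarrow> plugE F (Sft b) = plugE E s \<Longrightarrow> \<not> contr s s'"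
proof (induction F arbitrary: E)
  case EHole
  then show ?case by (cases E) (auto dest: contr_Sft_inv)
next
  case (EAppR v F)
  then show ?case
    by (cases E) (auto simp: plug_sft_not_val dest: contr_App_inv contr_not_val)
next
  case (EAppL F u)
  then show ?case
    by (cases E) (auto simp: plug_sft_not_val dest: contr_App_inv contr_not_val)
next
  case (ERst F)
  then show ?case by simp
qed

lemma pure_sft_inj: "pure F \<Longrightarrow> pure F' \<Longrightarrow> plugE F (Sft b) = plugE F' (Sft b') \<Longrightarrow> F = F' \<and> b = b'"
proof (induction F arbitrary: F')
  case EHole then show ?case by (cases F') auto
next
  case (EAppR v F) then show ?case by (cases F') (auto simp: plug_sft_not_val)
next
  case (EAppL F u) then show ?case by (cases F') (auto simp: plug_sft_not_val)
qed simp

lemma redex_no_inner: "contr s s' \<Longrightarrow> s = plugE E r \<Longrightarrow> ectx_ok E \<Longrightarrow> contr r r' \<Longrightarrow> E = EHole"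
proof (induction rule: contr.induct)
  case (beta v t)
  then show ?case
    by (cases E) (auto dest: contr_not_val)
next
  case (shift F t)
  then show ?case
    apply (cases E; simp)
    using pure_sft_no_redex by metis
next
  case (reset v)
  then show ?case
    by (cases E) (auto dest: contr_not_val)
qed

lemma decomp_unique: "ectx_ok E \<Longrightarrow> ectx_ok E' \<Longrightarrow> contr s s1 \<Longrightarrow> contr r r1 \<Longrightarrow> plugE E s = plugE E' r
   \<Longrightarrow> E = E' \<and> s = r"
proof (induction E arbitrary: E')
  case EHole
  have "E' = EHole"
    by (rule redex_no_inner[OF EHole.prems(3) _ EHole.prems(2,4)]) (use EHole.prems in simp)
  then show ?case using EHole.prems by simp
next
  case (EAppR v E)
  show ?case
  proof (cases E')
    case EHole
    have "EAppR v E = EHole"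
      by (rule redex_no_inner[OF EAppR.prems(4) _ EAppR.prems(1,3)]) (use EAppR.prems EHole in simp)
    then show ?thesis by simp
  next
    case (EAppR v' E2)
    with EAppR.prems have h: "v = v'" "plugE E s = plugE E2 r" "ectx_ok E" "ectx_ok E2" by auto
    from EAppR.IH[OF h(3,4) EAppR.prems(3,4) h(2)] h(1) EAppR show ?thesis by simp
  next
    case (EAppL E2 u) then show ?thesis using EAppR.prems by (auto dest: contr_not_val)
  next
    case (ERst E2) then show ?thesis using EAppR.prems by simp
  qed
next
  case (EAppL E u)
  show ?case
  proof (cases E')
    case EHole
    have "EAppL E u = EHole"
      by (rule redex_no_inner[OF EAppL.prems(4) _ EAppL.prems(1,3)]) (use EAppL.prems EHole in simp)
    then show ?thesis by simp
  next
    case (EAppL E2 u')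
    with EAppL.prems have h: "u = u'" "plugE E s = plugE E2 r" "ectx_ok E" "ectx_ok E2" by auto
    from EAppL.IH[OF h(3,4) EAppL.prems(3,4) h(2)] h(1) EAppL show ?thesis by simp
  next
    case (EAppR v E2) then show ?thesis using EAppL.prems by (auto dest: contr_not_val)
  next
    case (ERst E2) then show ?thesis using EAppL.prems by simp
  qed
next
  case (ERst E)
  show ?case
  proof (cases E')
    case EHole
    have "ERst E = EHole"
      by (rule redex_no_inner[OF ERst.prems(4) _ ERst.prems(1,3)]) (use ERst.prems EHole in simp)
    then show ?thesis by simp
  next
    case (ERst E2)
    with ERst.prems have h: "plugE E s = plugE E2 r" "ectx_ok E" "ectx_ok E2" by auto
    from ERst.IH[OF h(2,3) ERst.prems(3,4) h(1)] ERst show ?thesis by simp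
  qed (use ERst.prems in simp_all)
qed

lemma contr_det: "contr s a \<Longrightarrow> contr s b \<Longrightarrow> a = b"
proof (induction rule: contr.induct)
  case (beta v t)
  from beta.prems show ?case by (cases rule: contr.cases) auto
next
  case (shift F t)
  from shift.prems show ?case
  proof (cases rule: contr.cases)
    case (shift F' t')
    then have "F = F' \<and> t = t'" using pure_sft_inj[of F F' t t'] \<open>pure F\<close> by simp
    then show ?thesis using shift by simp
  next
    case reset
    then show ?thesis using plug_sft_not_val by metis
  qed
next
  case (reset v)
  from reset.prems show ?case
  proof (cases rule: contr.cases)
    case (shift F' t')
    then show ?thesis using plug_sft_not_val reset.hyps by metis
  qed auto
qed

lemma step_det: "step t a \<Longrightarrow> step t b \<Longrightarrow> a = b"
proof -
  assume "step t a" "step t b"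
  then obtain E s s' E2 r r' where h: "ectx_ok E" "contr s s'" "t = plugE E s" "a = plugE E s'"
    "ectx_ok E2" "contr r r'" "t = plugE E2 r" "b = plugE E2 r'" unfolding step_def by blast
  then have "E = E2 \<and> s = r" using decomp_unique[of E E2 s s' r r'] by simp
  then show "a = b" using h contr_det[of r s' r'] by simp
qed

lemma det_pow: "(step ^^ k) t s \<Longrightarrow> (step ^^ n) t u \<Longrightarrow> irreducible u \<Longrightarrow> k \<le> n \<and> (step ^^ (n - k)) s u"
proof (induction k arbitrary: t n)
  case 0 then show ?case by simp
next
  case (Suc k)
  from relpowp_Suc_D2[OF Suc.prems(1)] obtain t1 where t1: "step t t1" "(step ^^ k) t1 s" by blast
  show ?case
  proof (cases n)
    case 0 then have "t = u" using Suc.prems(2) by simp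
    then show ?thesis using Suc.prems(3) t1 unfolding irreducible_def by blast
  next
    case (Suc n')
    with relpowp_Suc_D2[where P=step and n=n' and x=t and z=u] Suc.prems obtain t2 where "step t t2" "(step ^^ n') t2 u" by blast
    with t1 step_det have "t1 = t2" by blast
    have "k \<le> n' \<and> (step ^^ (n' - k)) s u" using Suc.IH[OF t1(2)] \<open>t1 = t2\<close> \<open>(step ^^ n') t2 u\<close> Suc.prems(3) by simp
    then show ?thesis using \<open>n = Suc n'\<close> by simp
  qed
qed

fun Acp :: "trm \<Rightarrow> nat \<Rightarrow> trm" where
  "Acp w 0 = Sft I_trm"
| "Acp w (Suc a) = App (Rst (App w I_trm)) (Acp w a)"

inductive srel :: "trm \<Rightarrow> trm \<Rightarrow> bool" where
  RVar: "srel (Var i) (Var i)"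
| RLam: "srel t t' \<Longrightarrow> srel (Lam t) (Lam t')"
| RApp: "srel t t' \<Longrightarrow> srel u u' \<Longrightarrow> srel (App t u) (App t' u')"
| RSft: "srel t t' \<Longrightarrow> srel (Sft t) (Sft t')"
| RRst: "srel t t' \<Longrightarrow> srel (Rst t) (Rst t')"
| RG: "is_val w \<Longrightarrow> is_val w' \<Longrightarrow> srel w w' \<Longrightarrow> srel (Rst (Acp w (Suc a))) (Rst (Acp w' (Suc b)))"

inductive crel :: "ectx \<Rightarrow> ectx \<Rightarrow> bool" where
  CH: "crel EHole EHole"
| CR: "srel v v' \<Longrightarrow> crel E E' \<Longrightarrow> crel (EAppR v E) (EAppR v' E')"
| CL: "crel E E' \<Longrightarrow> srel u u' \<Longrightarrow> crel (EAppL E u) (EAppL E' u')"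
| CRs: "crel E E' \<Longrightarrow> crel (ERst E) (ERst E')"

inductive_cases srelVarE: "srel (Var i) t'"
inductive_cases srelLamE: "srel (Lam t) t'"
inductive_cases srelAppE: "srel (App t u) t'"
inductive_cases srelSftE: "srel (Sft t) t'"
inductive_cases srelRstE: "srel (Rst t) t'"

lemma srel_refl: "srel t t"
  by (induction t) (auto intro: srel.intros)

lemma srel_sym: "srel t t' \<Longrightarrow> srel t' t"
proof (induction rule: srel.induct)
  case (RG w w' a b)
  then show ?case using srel.RG[of w' w b a] by simp
qed (auto intro: srel.intros)

lemma srel_val: "srel v v' \<Longrightarrow> is_val v \<Longrightarrow> is_val v'"
  by (cases rule: srel.cases) auto

lemma crel_plug: "crel E E' \<Longrightarrow> srel r r' \<Longrightarrow> srel (plugE E r) (plugE E' r')"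
  by (induction rule: crel.induct) (auto intro: srel.intros)

lemma crel_ok: "crel E E' \<Longrightarrow> ectx_ok E \<Longrightarrow> ectx_ok E'"
  by (induction rule: crel.induct) (auto dest: srel_val)

lemma crel_pure: "crel E E' \<Longrightarrow> pure E \<Longrightarrow> pure E'"
  by (induction rule: crel.induct) (auto dest: srel_val)

lemma lift_I[simp]: "lift k I_trm = I_trm" by (simp add: I_trm_def)
lemma subst_I[simp]: "subst I_trm k s = I_trm" by (simp add: I_trm_def)

lemma lift_Acp[simp]: "lift k (Acp w a) = Acp (lift k w) a"
  by (induction a) auto
lemma subst_Acp[simp]: "subst (Acp w a) k s = Acp (subst w k s) a"
  by (induction a) auto

lemma is_val_lift[simp]: "is_val (lift k v) = is_val v"
  by (cases v) auto

lemma is_val_subst: "is_val v \<Longrightarrow> is_val s \<Longrightarrow> is_val (subst v k s)"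
  by (cases v) auto

lemma srel_lift: "srel t t' \<Longrightarrow> srel (lift k t) (lift k t')"
proof (induction arbitrary: k rule: srel.induct)
  case (RG w w' a b)
  then show ?case using srel.RG[of "lift k w" "lift k w'" a b] by simp
qed (auto intro: srel.intros)

lemma srel_subst: "srel t t' \<Longrightarrow> srel s s' \<Longrightarrow> is_val s \<Longrightarrow> srel (subst t k s) (subst t' k s')"
proof (induction arbitrary: k s s' rule: srel.induct)
  case (RG w w' a b)
  then have "is_val s'" using srel_val by blast
  then show ?case using RG srel.RG[of "subst w k s" "subst w' k s'" a b] by (simp add: is_val_subst)
next
  case (RLam t t')
  then show ?case by (simp add: srel_lift srel.RLam)
next
  case (RSft t t')
  then show ?case by (simp add: srel_lift srel.RSft)
qed (auto intro: srel.intros)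

lemma plugE_liftE: "plugE (liftE k E) (lift k t) = lift k (plugE E t)"
  by (induction E) auto

lemma pure_liftE: "pure F \<Longrightarrow> pure (liftE k F)"
  by (induction F) auto

lemma crel_liftE: "crel E E' \<Longrightarrow> crel (liftE k E) (liftE k E')"
  by (induction rule: crel.induct) (auto intro: crel.intros srel_lift)

lemma pure_plug_not_AppRst: "pure F \<Longrightarrow> plugE F (Sft b) \<noteq> App (Rst p) q"
  by (cases F) (auto dest: pure_plug_not_Rst)

lemma srel_pure_sft: "pure F \<Longrightarrow> srel (plugE F (Sft b)) u \<Longrightarrow>
   \<exists>F' b'. u = plugE F' (Sft b') \<and> pure F' \<and> crel F F' \<and> srel b b'"
proof (induction F arbitrary: u)
  case EHole
  then show ?case by (auto elim!: srelSftE intro!: exI[of _ EHole] crel.intros)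
next
  case (EAppR v F)
  then show ?case
    apply (auto elim!: srelAppE)
    subgoal for t' u'
    proof -
      assume h: "srel v t'" "srel (plugE F (Sft b)) u'" "u = App t' u'" "is_val v" "pure F"
      then obtain F' b' where "u' = plugE F' (Sft b')" "pure F'" "crel F F'" "srel b b'"
        using EAppR.IH[of u'] by blast
      then show ?thesis using h
        by (intro exI[of _ "EAppR t' F'"] exI[of _ b']) (auto intro: crel.intros dest: srel_val)
    qed
    done
next
  case (EAppL F w)
  then show ?case
    apply (auto elim!: srelAppE)
    subgoal for t' u'
    proof -
      assume h: "pure F" "srel (plugE F (Sft b)) t'" "srel w u'" "u = App t' u'"
      then obtain F' b' where "t' = plugE F' (Sft b')" "pure F'" "crel F F'" "srel b b'"
        using EAppL.IH[of t'] by blast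
      then show ?thesis using h
        by (intro exI[of _ "EAppL F' u'"] exI[of _ b']) (auto intro: crel.intros)
    qed
    done
qed simp

lemma contr_sim: "contr s s2 \<Longrightarrow> srel s s1 \<Longrightarrow> \<exists>s2'. contr s1 s2' \<and> srel s2 s2'"
proof (induction rule: contr.induct)
  case (beta v t)
  then show ?case
    apply (auto elim!: srelAppE srelLamE)
    subgoal for u' t'
      by (auto intro!: exI[of _ "subst t' 0 u'"] contr.beta srel_subst dest: srel_val)
    done
next
  case (shift F t)
  from shift.prems have "(\<exists>u. s1 = Rst u \<and> srel (plugE F (Sft t)) u) \<or>
    (\<exists>w a. plugE F (Sft t) = Acp w (Suc a))"
    by (auto elim!: srelRstE)
  then show ?case
  proof (elim disjE exE conjE)
    fix u assume 1: "s1 = Rst u" "srel (plugE F (Sft t)) u"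
    then obtain F' b' where F': "u = plugE F' (Sft b')" "pure F'" "crel F F'" "srel t b'"
      using srel_pure_sft shift.hyps by blast
    have "srel (Lam (Rst (plugE (liftE 0 F) (Var 0)))) (Lam (Rst (plugE (liftE 0 F') (Var 0))))"
      by (intro srel.intros crel_plug crel_liftE F' srel_refl)
    then show ?thesis using F' 1
      by (auto intro!: exI contr.shift srel.intros srel_subst)
  next
    fix w a assume "plugE F (Sft t) = Acp w (Suc a)"
    then show ?thesis using shift.hyps pure_plug_not_AppRst by (metis Acp.simps(2))
  qed
next
  case (reset v)
  then show ?case by (auto elim!: srelRstE intro: contr.reset srel_val)
qed

lemma decomp_rel: "ectx_ok E \<Longrightarrow> srel (plugE E s) t' \<Longrightarrow>
  (\<exists>E' s1. t' = plugE E' s1 \<and> crel E E' \<and> srel s s1) \<or>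
  (\<exists>E1 E1' w w' a b. plugE E s = plugE E1 (Rst (Acp w (Suc a))) \<and> t' = plugE E1' (Rst (Acp w' (Suc b)))
      \<and> crel E1 E1' \<and> srel w w' \<and> is_val w \<and> is_val w' \<and> ectx_ok E1)"
proof (induction E arbitrary: t')
  case EHole
  then show ?case by (intro disjI1 exI[of _ EHole]) (auto intro: crel.intros)
next
  case (EAppR v E)
  from EAppR.prems obtain v' X where t': "t' = App v' X" "srel v v'" "srel (plugE E s) X"
    by (auto elim: srelAppE)
  have ok: "ectx_ok E" using EAppR.prems(1) by simp
  from EAppR.IH[OF ok t'(3)] show ?case
  proof (elim disjE exE conjE)
    fix E' s1 assume "X = plugE E' s1" "crel E E'" "srel s s1"
    then show ?thesis using t' by (auto intro!: exI[of _ "EAppR v' E'"] crel.intros)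
  next
    fix E1 E1' w w' a b assume h: "plugE E s = plugE E1 (Rst (Acp w (Suc a)))"
      "X = plugE E1' (Rst (Acp w' (Suc b)))" "crel E1 E1'" "srel w w'" "is_val w" "is_val w'" "ectx_ok E1"
    show ?thesis
      apply (rule disjI2)
      apply (rule exI[of _ "EAppR v E1"], rule exI[of _ "EAppR v' E1'"])
      using h t' EAppR.prems(1) by (auto intro: crel.intros)
  qed
next
  case (EAppL E u)
  from EAppL.prems obtain u' X where t': "t' = App X u'" "srel u u'" "srel (plugE E s) X"
    by (auto elim: srelAppE)
  have ok: "ectx_ok E" using EAppL.prems(1) by simp
  from EAppL.IH[OF ok t'(3)] show ?case
  proof (elim disjE exE conjE)
    fix E' s1 assume "X = plugE E' s1" "crel E E'" "srel s s1"
    then show ?thesis using t' by (auto intro!: exI[of _ "EAppL E' u'"] crel.intros)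
  next
    fix E1 E1' w w' a b assume h: "plugE E s = plugE E1 (Rst (Acp w (Suc a)))"
      "X = plugE E1' (Rst (Acp w' (Suc b)))" "crel E1 E1'" "srel w w'" "is_val w" "is_val w'" "ectx_ok E1"
    show ?thesis
      apply (rule disjI2)
      apply (rule exI[of _ "EAppL E1 u"], rule exI[of _ "EAppL E1' u'"])
      using h t' EAppL.prems(1) by (auto intro: crel.intros)
  qed
next
  case (ERst E)
  from ERst.prems(2) have "(\<exists>X. t' = Rst X \<and> srel (plugE E s) X) \<or>
     (\<exists>w w' a b. plugE E s = Acp w (Suc a) \<and> t' = Rst (Acp w' (Suc b)) \<and> is_val w \<and> is_val w' \<and> srel w w')"
    by (auto elim!: srelRstE)
  then show ?case
  proof (elim disjE exE conjE)
    fix X assume 1: "t' = Rst X" "srel (plugE E s) X"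
    have ok: "ectx_ok E" using ERst.prems(1) by simp
    from ERst.IH[OF ok 1(2)] show ?thesis
    proof (elim disjE exE conjE)
      fix E' s1 assume "X = plugE E' s1" "crel E E'" "srel s s1"
      then show ?thesis using 1 by (auto intro!: exI[of _ "ERst E'"] crel.intros)
    next
      fix E1 E1' w w' a b assume h: "plugE E s = plugE E1 (Rst (Acp w (Suc a)))"
        "X = plugE E1' (Rst (Acp w' (Suc b)))" "crel E1 E1'" "srel w w'" "is_val w" "is_val w'" "ectx_ok E1"
      show ?thesis
        apply (rule disjI2)
        apply (rule exI[of _ "ERst E1"], rule exI[of _ "ERst E1'"])
        using h 1 by (auto intro: crel.intros)
    qed
  next
    fix w w' a b assume h: "plugE E s = Acp w (Suc a)" "t' = Rst (Acp w' (Suc b))" "is_val w" "is_val w'" "srel w w'"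
    show ?thesis
      apply (rule disjI2)
      apply (rule exI[of _ EHole], rule exI[of _ EHole])
      using h by (auto intro: crel.intros)
  qed
qed

fun cl :: "nat \<Rightarrow> trm \<Rightarrow> bool" where
  "cl n (Var i) = (i < n)"
| "cl n (Lam t) = cl (Suc n) t"
| "cl n (App t u) = (cl n t \<and> cl n u)"
| "cl n (Sft t) = cl (Suc n) t"
| "cl n (Rst t) = cl n t"

lemma cl_fv: "cl n t \<longleftrightarrow> (\<forall>i\<in>fv t. i < n)"
proof (induction t arbitrary: n)
  case (Lam t)
  show ?case
  proof
    assume "cl n (Lam t)"
    then show "\<forall>i\<in>fv (Lam t). i < n" using Lam[of "Suc n"] by auto
  next
    assume h: "\<forall>i\<in>fv (Lam t). i < n"
    have "\<forall>i\<in>fv t. i < Suc n"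
    proof
      fix i assume "i \<in> fv t"
      then show "i < Suc n" using h by (cases "i = 0") force+
    qed
    then show "cl n (Lam t)" using Lam[of "Suc n"] by simp
  qed
next
  case (Sft t)
  show ?case
  proof
    assume "cl n (Sft t)"
    then show "\<forall>i\<in>fv (Sft t). i < n" using Sft[of "Suc n"] by auto
  next
    assume h: "\<forall>i\<in>fv (Sft t). i < n"
    have "\<forall>i\<in>fv t. i < Suc n"
    proof
      fix i assume "i \<in> fv t"
      then show "i < Suc n" using h by (cases "i = 0") force+
    qed
    then show "cl n (Sft t)" using Sft[of "Suc n"] by simp
  qed
qed auto

lemma closed_cl: "closed t \<longleftrightarrow> cl 0 t"
  unfolding closed_def cl_fv by auto

lemma cl_lift: "cl n t \<Longrightarrow> cl (Suc n) (lift k t)"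
  by (induction t arbitrary: n k) auto

lemma cl_subst: "cl (Suc n) t \<Longrightarrow> cl n s \<Longrightarrow> k \<le> n \<Longrightarrow> cl n (subst t k s)"
  by (induction t arbitrary: n k s) (auto simp: cl_lift)

lemma cl_plug_sub: "cl n (plugE E s) \<Longrightarrow> cl n s"
  by (induction E) auto

lemma cl_plug_repl: "cl n (plugE E s) \<Longrightarrow> cl n s' \<Longrightarrow> cl n (plugE E s')"
  by (induction E) auto

lemma contr_cl: "contr s s' \<Longrightarrow> cl n s \<Longrightarrow> cl n s'"
proof (induction rule: contr.induct)
  case (beta v t)
  then show ?case by (auto intro: cl_subst)
next
  case (shift F t)
  then have b: "cl (Suc n) t" using cl_plug_sub[of n F "Sft t"] by simp
  have "cl (Suc n) (lift 0 (plugE F (Sft t)))" using shift cl_lift by simp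
  then have "cl (Suc n) (plugE (liftE 0 F) (lift 0 (Sft t)))" by (simp only: plugE_liftE)
  then have "cl (Suc n) (plugE (liftE 0 F) (Var 0))" using cl_plug_repl by fastforce
  then show ?case using b by (auto intro: cl_subst)
qed simp

lemma step_cl: "step t t' \<Longrightarrow> cl n t \<Longrightarrow> cl n t'"
  unfolding step_def using contr_cl cl_plug_sub cl_plug_repl by metis

lemma steps_cl: "step\<^sup>*\<^sup>* t t' \<Longrightarrow> cl n t \<Longrightarrow> cl n t'"
  by (induction rule: rtranclp_induct) (auto intro: step_cl)

lemma irred_ctx: "irreducible (plugE E r) \<Longrightarrow> ectx_ok E \<Longrightarrow> irreducible r"
  unfolding irreducible_def using step_ctx by blast

lemma progress: "cl 0 t \<Longrightarrow> irreducible t \<Longrightarrow> is_val t \<or> control_stuck t"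
proof (induction t)
  case (Var i) then show ?case by simp
next
  case (Lam t) then show ?case by simp
next
  case (Sft t) then show ?case unfolding control_stuck_def
    by (intro disjI2 exI[of _ EHole]) auto
next
  case (App t1 t2)
  have i1: "irreducible t1" using irred_ctx[of "EAppL EHole t2" t1] App.prems by simp
  have c1: "cl 0 t1" "cl 0 t2" using App.prems by auto
  from App.IH(1)[OF c1(1) i1] show ?case
  proof
    assume "control_stuck t1"
    then obtain F s where "pure F" "t1 = plugE F (Sft s)" unfolding control_stuck_def by blast
    then show ?thesis unfolding control_stuck_def
      by (intro disjI2 exI[of _ "EAppL F t2"] exI[of _ s]) auto
  next
    assume v1: "is_val t1"
    then obtain b where b: "t1 = Lam b" using c1 by (cases t1) auto
    have i2: "irreducible t2" using irred_ctx[of "EAppR t1 EHole" t2] App.prems v1 by simp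
    from App.IH(2)[OF c1(2) i2] show ?thesis
    proof
      assume "is_val t2"
      then have "step (App t1 t2) (subst b 0 t2)" using b contr_step contr.beta by simp
      then show ?thesis using App.prems unfolding irreducible_def by blast
    next
      assume "control_stuck t2"
      then obtain F s where "pure F" "t2 = plugE F (Sft s)" unfolding control_stuck_def by blast
      then show ?thesis unfolding control_stuck_def using v1
        by (intro disjI2 exI[of _ "EAppR t1 F"] exI[of _ s]) auto
    qed
  qed
next
  case (Rst t)
  have i1: "irreducible t" using irred_ctx[of "ERst EHole" t] Rst.prems by simp
  from Rst.IH[OF _ i1] Rst.prems have "is_val t \<or> control_stuck t" by simp
  then have "\<exists>t'. step (Rst t) t'"
    unfolding control_stuck_def using contr_step contr.reset contr.shift by blast
  then show ?case using Rst.prems unfolding irreducible_def by blast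
qed

lemma val_irred: "is_val v \<Longrightarrow> irreducible v"
  unfolding irreducible_def step_def using val_no_redex by blast

lemma cs_irred: "pure F \<Longrightarrow> irreducible (plugE F (Sft b))"
  unfolding irreducible_def step_def using pure_sft_no_redex by blast

lemma step_Rst: "step (Rst z) y \<Longrightarrow> (\<exists>z'. y = Rst z') \<or> is_val y"
  unfolding step_def
  apply (elim exE conjE)
  subgoal for E s s'
    apply (cases E)
    apply (auto elim: contr.cases)
    done
  done

lemma steps_Rst: "step\<^sup>*\<^sup>* (Rst x) y \<Longrightarrow> (\<exists>z. y = Rst z) \<or> is_val y"
proof (induction rule: rtranclp_induct)
  case (step y z)
  then show ?case using step_Rst val_irred unfolding irreducible_def by blast
qed simp

lemma cs_not_Rst: "control_stuck (Rst z) \<Longrightarrow> False"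
  unfolding control_stuck_def using pure_plug_not_Rst by metis

lemma plugE_inj: "plugE E x = plugE E y \<Longrightarrow> x = y"
  by (induction E) auto

lemma copies: "step\<^sup>*\<^sup>* (Rst (App w I_trm)) v \<Longrightarrow> is_val v \<Longrightarrow> pure F \<Longrightarrow> ectx_ok E \<Longrightarrow>
   step\<^sup>*\<^sup>* (plugE E (Rst (plugE F (Acp w a)))) (plugE E I_trm)"
proof (induction a arbitrary: F)
  case 0
  have "contr (Rst (plugE F (Sft I_trm))) (Rst (subst I_trm 0 (Lam (Rst (plugE (liftE 0 F) (Var 0))))))"
    using 0 by (rule_tac contr.shift) simp
  then have s1: "step (plugE E (Rst (plugE F (Sft I_trm)))) (plugE E (Rst I_trm))"
    using step_ctx contr_step 0 by simp
  have "contr (Rst I_trm) I_trm" by (rule contr.reset) (simp add: I_trm_def)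
  then have s2: "step (plugE E (Rst I_trm)) (plugE E I_trm)"
    using step_ctx contr_step 0 by simp
  from s1 s2 show ?case by simp
next
  case (Suc a)
  define Ec where "Ec = compE E (ERst (compE F (EAppL EHole (Acp w a))))"
  have "ectx_ok (compE F (EAppL EHole (Acp w a)))"
    using Suc.prems(3) by (intro ok_compE pure_ok) auto
  then have ok: "ectx_ok Ec" unfolding Ec_def using Suc.prems(4)
    by (intro ok_compE) auto
  have "step\<^sup>*\<^sup>* (plugE Ec (Rst (App w I_trm))) (plugE Ec v)"
    using steps_ctx[OF Suc.prems(1) ok] .
  moreover have "plugE Ec (Rst (App w I_trm)) = plugE E (Rst (plugE F (Acp w (Suc a))))"
    unfolding Ec_def by (simp add: plugE_compE)
  moreover have "plugE Ec v = plugE E (Rst (plugE (compE F (EAppR v EHole)) (Acp w a)))"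
    unfolding Ec_def by (simp add: plugE_compE)
  moreover have "step\<^sup>*\<^sup>* (plugE E (Rst (plugE (compE F (EAppR v EHole)) (Acp w a)))) (plugE E I_trm)"
    using Suc.IH[OF Suc.prems(1,2) _ Suc.prems(4)] Suc.prems(2,3) by (simp add: pure_compE)
  ultimately show ?case by simp
qed

lemma split_eval: "(step ^^ n) (plugE Ec r) u \<Longrightarrow> irreducible u \<Longrightarrow> ectx_ok Ec \<Longrightarrow>
  \<exists>m r'. (step ^^ m) r r' \<and> irreducible r'"
proof (induction n arbitrary: r)
  case 0
  then have "irreducible r" using irred_ctx[of Ec r] by simp
  then show ?case by (intro exI[of _ 0]) auto
next
  case (Suc n)
  show ?case
  proof (cases "irreducible r")
    case True then show ?thesis by (intro exI[of _ 0]) auto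
  next
    case False
    then obtain r1 where r1: "step r r1" unfolding irreducible_def by blast
    then have s: "step (plugE Ec r) (plugE Ec r1)" using step_ctx Suc.prems(3) by blast
    from relpowp_Suc_D2[OF Suc.prems(1)] obtain y where y: "step (plugE Ec r) y" "(step ^^ n) y u" by blast
    then have "y = plugE Ec r1" using s step_det by blast
    then obtain m r' where "(step ^^ m) r1 r'" "irreducible r'" using Suc.IH[of r1] y Suc.prems(2,3) by blast
    then show ?thesis using relpowp_Suc_I2[where P=step and n=m and z=r', OF r1] by blast
  qed
qed

lemma main: "(step ^^ n) t u \<Longrightarrow> irreducible u \<Longrightarrow> cl 0 t \<Longrightarrow> srel t t' \<Longrightarrow>
  \<exists>u'. step\<^sup>*\<^sup>* t' u' \<and> irreducible u' \<and> (is_val u \<longrightarrow> is_val u') \<and> (control_stuck u \<longrightarrow> control_stuck u')"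
proof (induction n arbitrary: t t' u rule: less_induct)
  case (less n)
  show ?case
  proof (cases "irreducible t")
    case True
    have "n = 0"
    proof (rule ccontr)
      assume "n \<noteq> 0"
      then obtain k where "n = Suc k" by (cases n) auto
      then obtain y where "step t y" using relpowp_Suc_D2 less.prems(1) by metis
      then show False using True unfolding irreducible_def by blast
    qed
    then have tu: "u = t" using less.prems(1) by simp
    from progress[OF less.prems(3) True] show ?thesis
    proof
      assume "is_val t"
      have nc: "\<not> control_stuck t" using \<open>is_val t\<close> plug_sft_not_val unfolding control_stuck_def by metis
      have "is_val t'" using srel_val less.prems(4) \<open>is_val t\<close> by blast
      then show ?thesis using tu nc val_irred[of t'] by blast
    next
      assume "control_stuck t"
      then obtain F b where "pure F" "t = plugE F (Sft b)" unfolding control_stuck_def by blast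
      then obtain F' b' where "t' = plugE F' (Sft b')" "pure F'"
        using srel_pure_sft less.prems(4) by blast
      then have "control_stuck t'" "irreducible t'" using cs_irred unfolding control_stuck_def by blast+
      moreover have "\<not> is_val t" using \<open>control_stuck t\<close> plug_sft_not_val unfolding control_stuck_def by metis
      ultimately show ?thesis using tu by blast
    qed
  next
    case False
    then obtain t2 where "step t t2" unfolding irreducible_def by blast
    then obtain E s s2 where h: "ectx_ok E" "contr s s2" "t = plugE E s" "t2 = plugE E s2"
      unfolding step_def by blast
    have n0: "n \<noteq> 0" using False less.prems(1,2) by (cases n) auto
    then obtain n' where n': "n = Suc n'" by (cases n) auto
    have "srel (plugE E s) t'" using less.prems(4) h(3) by simp
    from decomp_rel[OF h(1) this] show ?thesis
    proof (elim disjE exE conjE)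
      fix E' s1 assume a: "t' = plugE E' s1" "crel E E'" "srel s s1"
      obtain s2' where s2': "contr s1 s2'" "srel s2 s2'" using contr_sim[OF h(2) a(3)] by blast
      have ok': "ectx_ok E'" using crel_ok a(2) h(1) by blast
      have st': "step t' (plugE E' s2')" using a(1) step_ctx[OF contr_step[OF s2'(1)] ok'] by simp
      from relpowp_Suc_D2[where P=step and n=n' and x=t and z=u] less.prems(1) n' obtain y where y: "step t y" "(step ^^ n') y u" by blast
      then have "y = t2" using \<open>step t t2\<close> step_det by blast
      have "cl 0 t2" using step_cl \<open>step t t2\<close> less.prems(3) by blast
      moreover have "srel t2 (plugE E' s2')" using h(4) crel_plug a(2) s2'(2) by simp
      ultimately obtain u' where "step\<^sup>*\<^sup>* (plugE E' s2') u'" "irreducible u'"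
          "(is_val u \<longrightarrow> is_val u')" "(control_stuck u \<longrightarrow> control_stuck u')"
        using less.IH[of n' t2 u "plugE E' s2'"] n' y \<open>y = t2\<close> less.prems(2) by blast
      then show ?thesis using st' by (meson converse_rtranclp_into_rtranclp)
    next
      fix E1 E1' w w' a b assume B: "plugE E s = plugE E1 (Rst (Acp w (Suc a)))"
        "t' = plugE E1' (Rst (Acp w' (Suc b)))" "crel E1 E1'" "srel w w'" "is_val w" "is_val w'" "ectx_ok E1"
      define Ec where "Ec = compE E1 (ERst (EAppL EHole (Acp w a)))"
      have okc: "ectx_ok Ec" unfolding Ec_def using B(7) by (intro ok_compE) auto
      have tEc: "t = plugE Ec (Rst (App w I_trm))" unfolding Ec_def using B(1) h(3) by (simp add: plugE_compE)
      obtain m r' where mr: "(step ^^ m) (Rst (App w I_trm)) r'" "irreducible r'"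
        using split_eval[OF _ less.prems(2) okc] less.prems(1) tEc by blast
      have clw: "cl 0 (Rst (App w I_trm))" using cl_plug_sub less.prems(3) tEc by blast
      have "cl 0 r'" using steps_cl[OF relpowp_imp_rtranclp[OF mr(1)] clw] .
      then have "is_val r' \<or> control_stuck r'" using progress mr(2) by blast
      moreover have "(\<exists>z. r' = Rst z) \<or> is_val r'" using steps_Rst relpowp_imp_rtranclp[OF mr(1)] by blast
      ultimately have vr: "is_val r'" using cs_not_Rst by blast
      have p1: "(step ^^ m) t (plugE Ec r')" using pow_ctx[OF mr(1) okc] tEc by simp
      have "step\<^sup>*\<^sup>* (plugE E1 (Rst (plugE (EAppR r' EHole) (Acp w a)))) (plugE E1 I_trm)"
        using copies[OF relpowp_imp_rtranclp[OF mr(1)] vr _ B(7), of "EAppR r' EHole" a] vr by simp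
      moreover have "plugE Ec r' = plugE E1 (Rst (plugE (EAppR r' EHole) (Acp w a)))"
        unfolding Ec_def by (simp add: plugE_compE)
      ultimately obtain j where j: "(step ^^ j) (plugE Ec r') (plugE E1 I_trm)"
        using rtranclp_power by metis
      have "j \<noteq> 0"
      proof
        assume "j = 0"
        then have "plugE Ec r' = plugE E1 I_trm" using j by simp
        then have "Rst (App r' (Acp w a)) = I_trm" unfolding Ec_def by (auto simp: plugE_compE dest: plugE_inj)
        then show False by (simp add: I_trm_def)
      qed
      have "(step ^^ (m + j)) t (plugE E1 I_trm)" unfolding relpowp_add using p1 j by blast
      from det_pow[OF this less.prems(1,2)] have
        dj: "m + j \<le> n" "(step ^^ (n - (m + j))) (plugE E1 I_trm) u" by auto
      have "srel (Rst (App w I_trm)) (Rst (App w' I_trm))" using B(4) by (intro srel.intros srel_refl)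
      then obtain u1 where u1: "step\<^sup>*\<^sup>* (Rst (App w' I_trm)) u1" "is_val u1"
        using less.IH[of m "Rst (App w I_trm)" r' "Rst (App w' I_trm)"] mr clw vr dj \<open>j \<noteq> 0\<close> by auto
      have okE1': "ectx_ok E1'" using crel_ok B(3,7) by blast
      have r1: "step\<^sup>*\<^sup>* t' (plugE E1' I_trm)"
        using copies[OF u1(1) u1(2) _ okE1', of EHole "Suc b"] B(2) by simp
      have "cl 0 (plugE E1 I_trm)"
        using steps_cl[OF relpowp_imp_rtranclp[OF \<open>(step ^^ (m + j)) t (plugE E1 I_trm)\<close>] less.prems(3)] .
      moreover have "srel (plugE E1 I_trm) (plugE E1' I_trm)" using crel_plug B(3) srel_refl by blast
      ultimately obtain u' where "step\<^sup>*\<^sup>* (plugE E1' I_trm) u'" "irreducible u'"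
          "(is_val u \<longrightarrow> is_val u')" "(control_stuck u \<longrightarrow> control_stuck u')"
        using less.IH[of "n - (m + j)" "plugE E1 I_trm" u "plugE E1' I_trm"] dj \<open>j \<noteq> 0\<close> less.prems(2) by auto
      then show ?thesis using r1 by (meson rtranclp_trans)
    qed
  qed
qed

lemma srel_plug: "srel r r' \<Longrightarrow> srel (plug C r) (plug C r')"
  by (induction C) (auto intro: srel.intros srel_refl)

lemma obs: "closed p \<Longrightarrow> srel p q \<Longrightarrow> eval p u \<Longrightarrow>
  \<exists>u'. eval q u' \<and> (is_val u \<longrightarrow> is_val u') \<and> (control_stuck u \<longrightarrow> control_stuck u')"
proof -
  assume a: "closed p" "srel p q" "eval p u"
  then obtain n where "(step ^^ n) p u" "irreducible u" unfolding eval_def rtranclp_power by blast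
  from main[OF this] a show ?thesis unfolding eval_def closed_cl by blast
qed

lemma ctx_part:
  fixes x :: nat
  defines "a \<equiv> Rst (App (Var x) I_trm)"
  shows "ctx_equiv (Rst (App a (Sft I_trm))) (Rst (App a (App a (Sft I_trm))))"
proof -
  have base: "srel (Rst (App a (Sft I_trm))) (Rst (App a (App a (Sft I_trm))))"
    using srel.RG[of "Var x" "Var x" 0 1] srel.RVar unfolding a_def by simp
  show ?thesis unfolding ctx_equiv_def
  proof (intro allI impI conjI iffI)
    fix C assume cl: "closed (plug C (Rst (App a (Sft I_trm)))) \<and> closed (plug C (Rst (App a (App a (Sft I_trm)))))"
    have s1: "srel (plug C (Rst (App a (Sft I_trm)))) (plug C (Rst (App a (App a (Sft I_trm)))))"
      using srel_plug base by blast
    have s2: "srel (plug C (Rst (App a (App a (Sft I_trm))))) (plug C (Rst (App a (Sft I_trm))))"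
      using srel_sym s1 by blast
    {
      assume "\<exists>v. eval (plug C (Rst (App a (Sft I_trm)))) v \<and> is_val v"
      then show "\<exists>v. eval (plug C (Rst (App a (App a (Sft I_trm))))) v \<and> is_val v"
        using obs[OF _ s1] cl by blast
    }
    {
      assume "\<exists>v. eval (plug C (Rst (App a (App a (Sft I_trm))))) v \<and> is_val v"
      then show "\<exists>v. eval (plug C (Rst (App a (Sft I_trm)))) v \<and> is_val v"
        using obs[OF _ s2] cl by blast
    }
    {
      assume "\<exists>v. eval (plug C (Rst (App a (Sft I_trm)))) v \<and> control_stuck v"
      then show "\<exists>v. eval (plug C (Rst (App a (App a (Sft I_trm))))) v \<and> control_stuck v"
        using obs[OF _ s1] cl by blast
    }
    {
      assume "\<exists>v. eval (plug C (Rst (App a (App a (Sft I_trm))))) v \<and> control_stuck v"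
      then show "\<exists>v. eval (plug C (Rst (App a (Sft I_trm)))) v \<and> control_stuck v"
        using obs[OF _ s2] cl by blast
    }
  qed
qed

lemma plugE_Rst'[simp]: "Rst u = plugE E s \<longleftrightarrow> (E = EHole \<and> s = Rst u) \<or> (\<exists>E'. E = ERst E' \<and> u = plugE E' s)"
  by (cases E) auto
lemma plugE_App'[simp]: "App p q = plugE E s \<longleftrightarrow> (E = EHole \<and> s = App p q) \<or> (\<exists>E'. E = EAppL E' q \<and> p = plugE E' s)
   \<or> (\<exists>E'. E = EAppR p E' \<and> q = plugE E' s)"
  by (cases E) auto

lemma compE_ERst[simp]: "ERst X = compE E E2 \<longleftrightarrow> (E = EHole \<and> E2 = ERst X) \<or> (\<exists>E'. E = ERst E' \<and> X = compE E' E2)"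
  by (cases E) auto
lemma compE_EAppL[simp]: "EAppL X u = compE E E2 \<longleftrightarrow> (E = EHole \<and> E2 = EAppL X u) \<or> (\<exists>E'. E = EAppL E' u \<and> X = compE E' E2)"
  by (cases E) auto
lemma compE_EAppR[simp]: "EAppR v X = compE E E2 \<longleftrightarrow> (E = EHole \<and> E2 = EAppR v X) \<or> (\<exists>E'. E = EAppR v E' \<and> X = compE E' E2)"
  by (cases E) auto
lemma compE_EHole[simp]: "EHole = compE E E2 \<longleftrightarrow> E = EHole \<and> E2 = EHole"
  by (cases E) auto

fun is_redex :: "trm \<Rightarrow> bool" where
  "is_redex (App (Lam b) v) = is_val v"
| "is_redex (Rst p) = (is_val p \<or> (\<exists>F b. pure F \<and> p = plugE F (Sft b)))"
| "is_redex _ = False"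

lemma contr_is_redex: "contr s s' \<Longrightarrow> is_redex s"
  by (induction rule: contr.induct) auto

lemma plugE_sft_App: "App p q = plugE F (Sft b) \<longleftrightarrow> (\<exists>F'. F = EAppL F' q \<and> p = plugE F' (Sft b)) \<or> (\<exists>F'. F = EAppR p F' \<and> q = plugE F' (Sft b))"
  by (cases F) auto

lemma irr_intro: "(\<And>E s s'. ectx_ok E \<Longrightarrow> t = plugE E s \<Longrightarrow> contr s s' \<Longrightarrow> False) \<Longrightarrow> irreducible t"
  unfolding irreducible_def step_def by blast

lemma irr0: "irreducible (Rst (App (Rst (App (Var x) I_trm)) (Sft I_trm)))"
  apply (rule irr_intro)
  apply (drule contr_is_redex)
  apply (auto simp: I_trm_def plugE_sft_App)
  done

lemma irr1: "irreducible (Rst (App (Rst (App (Var x) I_trm)) (App (Rst (App (Var x) I_trm)) (Sft I_trm))))"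
  apply (rule irr_intro)
  apply (drule contr_is_redex)
  apply (auto simp: I_trm_def plugE_sft_App)
  done

lemma irr2: "irreducible (Rst (App (Var z) (App (Rst (App (Var x) I_trm)) (Sft I_trm))))"
  apply (rule irr_intro)
  apply (drule contr_is_redex)
  apply (auto simp: I_trm_def plugE_sft_App)
  done

lemma eval_irr: "irreducible t \<Longrightarrow> eval t u \<Longrightarrow> u = t"
  unfolding eval_def irreducible_def by (auto elim: converse_rtranclpE)

lemma eval_u0: "eval (Rst (App (Var z) (Sft I_trm))) I_trm"
proof -
  have "contr (Rst (plugE (EAppR (Var z) EHole) (Sft I_trm)))
      (Rst (subst I_trm 0 (Lam (Rst (plugE (liftE 0 (EAppR (Var z) EHole)) (Var 0))))))"
    by (rule contr.shift) simp
  then have s1: "step (Rst (App (Var z) (Sft I_trm))) (Rst I_trm)" using contr_step by simp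
  have "contr (Rst I_trm) I_trm" by (rule contr.reset) (simp add: I_trm_def)
  then have s2: "step (Rst I_trm) I_trm" using contr_step by simp
  have "irreducible I_trm" by (rule val_irred) (simp add: I_trm_def)
  then show ?thesis unfolding eval_def using s1 s2 by auto
qed

lemma nb_part:
  fixes x :: nat
  defines "a \<equiv> Rst (App (Var x) I_trm)"
  shows "\<not> nf_bisimilar (Rst (App a (Sft I_trm))) (Rst (App a (App a (Sft I_trm))))"
proof
  assume "nf_bisimilar (Rst (App a (Sft I_trm))) (Rst (App a (App a (Sft I_trm))))"
  then obtain R where R: "nf_bisim R" "R (Rst (App a (Sft I_trm))) (Rst (App a (App a (Sft I_trm))))"
    unfolding nf_bisimilar_def by blast
  have sim: "nf_sim R" using R(1) unfolding nf_bisim_def by blast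
  have i0: "irreducible (Rst (App a (Sft I_trm)))" unfolding a_def by (rule irr0)
  have i1: "irreducible (Rst (App a (App a (Sft I_trm))))" unfolding a_def by (rule irr1)
  have "eval (Rst (App a (Sft I_trm))) (Rst (App a (Sft I_trm)))" using i0 unfolding eval_def by simp
  then obtain t1' where "eval (Rst (App a (App a (Sft I_trm)))) t1'" "nf_rel R (Rst (App a (Sft I_trm))) t1'"
    using sim R(2) unfolding nf_sim_def by blast
  then have nr: "nf_rel R (Rst (App a (Sft I_trm))) (Rst (App a (App a (Sft I_trm))))"
    using eval_irr[OF i1] by blast
  have key: "R (Rst (App (Var (Suc x)) (Sft I_trm))) (Rst (App (Var (Suc x)) (App a (Sft I_trm))))"
  proof -
    have nv: "\<not> val_rel R (Rst (App a (Sft I_trm))) (Rst (App a (App a (Sft I_trm))))"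
      unfolding val_rel_def by simp
    have nc: "\<not> (\<exists>F0 s0. pure F0 \<and> Rst (App a (Sft I_trm)) = plugE F0 (Sft s0))"
      using pure_plug_not_Rst by metis
    from nr nv nc obtain E0 E1 y v0 v1 where h: "ectx_ok E0" "ectx_ok E1"
      "Rst (App a (Sft I_trm)) = plugE E0 (App (Var y) v0)"
      "Rst (App a (App a (Sft I_trm))) = plugE E1 (App (Var y) v1)"
      "ectx_rel R E0 E1"
      unfolding nf_rel_def by blast
    have E0: "E0 = ERst (EAppL (ERst EHole) (Sft I_trm))" using h(3) unfolding a_def by (auto simp: I_trm_def)
    have E1: "E1 = ERst (EAppL (ERst EHole) (App a (Sft I_trm)))" using h(2,4) unfolding a_def by (auto simp: I_trm_def)
    have np: "\<not> pure E0" using E0 by simp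
    from h(5) np obtain E0' F0 E1' F1 where g: "ectx_ok E0'" "ectx_ok E1'" "pure F0" "pure F1"
        "E0 = compE E0' (ERst F0)" "E1 = compE E1' (ERst F1)"
        "\<forall>z. z \<notin> fvE E0 \<union> fvE E1 \<longrightarrow> R (plugE E0' (Var z)) (plugE E1' (Var z))"
      unfolding ectx_rel_def by blast
    have E0': "E0' = ERst (EAppL EHole (Sft I_trm))" using g(3,5) E0 by auto
    have E1': "E1' = ERst (EAppL EHole (App a (Sft I_trm)))" using g(4,6) E1 by auto
    have "Suc x \<notin> fvE E0 \<union> fvE E1" using E0 E1 unfolding a_def by (auto simp: I_trm_def)
    then show ?thesis using g(7) E0' E1' by auto
  qed
  obtain t' where "eval (Rst (App (Var (Suc x)) (App a (Sft I_trm)))) t'" "nf_rel R I_trm t'"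
    using sim key eval_u0 unfolding nf_sim_def by blast
  moreover have "irreducible (Rst (App (Var (Suc x)) (App a (Sft I_trm))))" unfolding a_def by (rule irr2)
  ultimately have "nf_rel R I_trm (Rst (App (Var (Suc x)) (App a (Sft I_trm))))" using eval_irr by blast
  then show False unfolding nf_rel_def val_rel_def by (auto simp: I_trm_def)
qed

theorem proposition1:
  fixes x :: nat
  defines "a \<equiv> Rst (App (Var x) I_trm)"
  shows "ctx_equiv (Rst (App a (Sft I_trm))) (Rst (App a (App a (Sft I_trm))))
         \<and> \<not> nf_bisimilar (Rst (App a (Sft I_trm))) (Rst (App a (App a (Sft I_trm))))"
  using ctx_part[of x] nb_part[of x] unfolding a_def by blast

end
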